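(* Let $n\ge2$ and let $X,Y$ be identically distributed random variables taking values in $\{x_1,\dots,x_n\}$ with $x_1<\dots<x_n$, each value with positive probability. Let $P=(p_{ij})_{n\times n}$ with $p_{ij}=\mathbb P(X=x_i,Y=x_j)$, $\mathbf p=P\mathbf 1_n=(p_1,\dots,p_n)^\top$ and $D=\mathrm{diag}(\mathbf p)$. Then for $r\in[-1,1]$, $(X,Y)\in\mathrm{IC}_r$ if and only if $$\frac{P+P^\top}{2}=rD+(1-r)\mathbf p\mathbf p^\top.$$ Furthermore, in this case $\underline r_{\mathbf p}\le r\le1$, where $$\underline r_{\mathbf p}=\max\Big(\max_{j\in[n]}\Big(-\frac{p_j}{1-p_j}\Big),\ \max_{i,j\in[n],\,i\ne j}\Big(1-\frac1{p_ip_j}\Big)\Big).$$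
   Context: $(X,Y)\in\mathrm{IC}_r$ means $\mathrm{Corr}(X,Y)=\mathrm{Corr}(g(X),g(Y))=r$ for every measurable $g:\mathbb R\to\mathbb R$ such that $g(X),g(Y)$ are non-degenerate with finite variance. (Equivalently the condition says $(X,Y)$ is quasi-$r$-Fréchet.) *)

theory Defs
  imports "HOL-Probability.Probability"
begin

definition covar :: "'a measure \<Rightarrow> ('a \<Rightarrow> real) \<Rightarrow> ('a \<Rightarrow> real) \<Rightarrow> real" where
  "covar M U V = (LINT w|M. (U w - (LINT z|M. U z)) * (V w - (LINT z|M. V z)))"

definition corr :: "'a measure \<Rightarrow> ('a \<Rightarrow> real) \<Rightarrow> ('a \<Rightarrow> real) \<Rightarrow> real" where
  "corr M U V = covar M U V / sqrt (covar M U U * covar M V V)"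

definition admissible_rv :: "'a measure \<Rightarrow> ('a \<Rightarrow> real) \<Rightarrow> bool" where
  "admissible_rv M U \<longleftrightarrow> U \<in> borel_measurable M \<and> integrable M (\<lambda>w. (U w)\<^sup>2)
     \<and> \<not> (\<exists>c. AE w in M. U w = c)"

definition IC :: "'a measure \<Rightarrow> ('a \<Rightarrow> real) \<Rightarrow> ('a \<Rightarrow> real) \<Rightarrow> real \<Rightarrow> bool" where
  "IC M X Y r \<longleftrightarrow> corr M X Y = r \<and>
     (\<forall>g \<in> borel_measurable borel.
        admissible_rv M (\<lambda>w. g (X w)) \<and> admissible_rv M (\<lambda>w. g (Y w))
        \<longrightarrow> corr M (\<lambda>w. g (X w)) (\<lambda>w. g (Y w)) = r)"

end

theory Submission imports Defs begin

locale finpair = prob_space M for M :: "'a measure" +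
  fixes X Y :: "'a \<Rightarrow> real" and n :: nat and x :: "nat \<Rightarrow> real"
    and P :: "nat \<Rightarrow> nat \<Rightarrow> real" and p :: "nat \<Rightarrow> real"
  assumes Xm[measurable]: "X \<in> borel_measurable M" and Ym[measurable]: "Y \<in> borel_measurable M"
    and n2: "n \<ge> 2"
    and xmono: "\<And>i j. i < j \<Longrightarrow> j < n \<Longrightarrow> x i < x j"
    and Xr: "\<And>w. w \<in> space M \<Longrightarrow> X w \<in> x ` {..<n}"
    and Yr: "\<And>w. w \<in> space M \<Longrightarrow> Y w \<in> x ` {..<n}"
    and dXY: "distr M borel X = distr M borel Y"
    and ppos: "\<And>i. i < n \<Longrightarrow> measure M {w \<in> space M. X w = x i} > 0"
    and Pd: "\<And>i j. P i j = measure M {w \<in> space M. X w = x i \<and> Y w = x j}"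
    and pd: "\<And>i. p i = (\<Sum>j<n. P i j)"
begin

lemma x_inj: "a < n \<Longrightarrow> b < n \<Longrightarrow> x a = x b \<Longrightarrow> a = b"
  by (metis linorder_neqE_nat less_irrefl xmono)

lemma G:
  fixes F :: "real \<Rightarrow> real \<Rightarrow> real"
  shows "integrable M (\<lambda>w. F (X w) (Y w)) \<and>
    (LINT w|M. F (X w) (Y w)) = (\<Sum>a<n. \<Sum>b<n. F (x a) (x b) * P a b)"
proof -
  define A where "A a b = {w \<in> space M. X w = x a \<and> Y w = x b}" for a b
  have As: "A a b \<in> sets M" for a b unfolding A_def by measurable
  have eq: "F (X w) (Y w) = (\<Sum>a<n. \<Sum>b<n. F (x a) (x b) * indicator (A a b) w)"
    if w: "w \<in> space M" for w
  proof -
    obtain i where i: "i < n" "X w = x i" using Xr[OF w] by auto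
    obtain j where j: "j < n" "Y w = x j" using Yr[OF w] by auto
    have "(\<Sum>a<n. \<Sum>b<n. F (x a) (x b) * indicator (A a b) w)
       = (\<Sum>a<n. if a = i then (\<Sum>b<n. if b = j then F (x i) (x j) else 0) else 0)"
    proof (intro sum.cong refl)
      fix a assume a: "a \<in> {..<n}"
      show "(\<Sum>b<n. F (x a) (x b) * indicator (A a b) w) = (if a = i then (\<Sum>b<n. if b = j then F (x i) (x j) else 0) else 0)"
      proof (cases "a = i")
        case True
        have "F (x i) (x b) * indicator (A i b) w = (if b = j then F (x i) (x j) else 0)" if "b < n" for b
          using i j w x_inj a that by (auto simp: A_def indicator_def)
        then show ?thesis unfolding True by (simp only: if_P[OF refl]) (rule sum.cong; simp)
      next
        case False
        show ?thesis using False i j w x_inj a by (auto simp: A_def indicator_def intro!: sum.neutral)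
      qed
    qed
    also have "\<dots> = F (X w) (Y w)" using i j by simp
    finally show ?thesis by simp
  qed
  have int: "integrable M (\<lambda>w. \<Sum>a<n. \<Sum>b<n. F (x a) (x b) * indicator (A a b) w)"
    by (intro Bochner_Integration.integrable_sum integrable_mult_right) (auto intro!: integrable_real_indicator As simp: less_top[symmetric])
  have "integrable M (\<lambda>w. F (X w) (Y w))"
    using int by (subst Bochner_Integration.integrable_cong[OF refl eq]) auto
  moreover have "(LINT w|M. F (X w) (Y w)) = (LINT w|M. (\<Sum>a<n. \<Sum>b<n. F (x a) (x b) * indicator (A a b) w))"
    by (rule Bochner_Integration.integral_cong) (auto simp: eq)
  moreover have "\<dots> = (\<Sum>a<n. \<Sum>b<n. F (x a) (x b) * P a b)"
  proof -
    have ii: "integrable M (indicat_real (A a b))" for a b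
      using As by (auto intro!: integrable_real_indicator simp: less_top[symmetric])
    have sp: "A a b \<inter> space M = A a b" for a b unfolding A_def by auto
    have "(LINT w|M. (\<Sum>a<n. \<Sum>b<n. F (x a) (x b) * indicator (A a b) w)) = (\<Sum>a<n. \<Sum>b<n. F (x a) (x b) * measure M (A a b))"
    proof -
      have "(LINT w|M. (\<Sum>a<n. \<Sum>b<n. F (x a) (x b) * indicator (A a b) w)) = (\<Sum>a<n. LINT w|M. (\<Sum>b<n. F (x a) (x b) * indicator (A a b) w))"
        by (rule Bochner_Integration.integral_sum) (intro Bochner_Integration.integrable_sum integrable_mult_right ii)
      also have "\<dots> = (\<Sum>a<n. \<Sum>b<n. LINT w|M. F (x a) (x b) * indicator (A a b) w)"
        by (intro sum.cong refl Bochner_Integration.integral_sum integrable_mult_right ii)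
      also have "\<dots> = (\<Sum>a<n. \<Sum>b<n. F (x a) (x b) * measure M (A a b))"
        by (simp only: integral_mult_right_zero Bochner_Integration.integral_indicator sp)
      finally show ?thesis .
    qed
    then show ?thesis by (simp add: Pd A_def)
  qed
  ultimately show ?thesis by simp
qed


lemma ind_x: "a < n \<Longrightarrow> i < n \<Longrightarrow> indicator {x i} (x a) = (if a = i then 1 else (0::real))"
  using x_inj by (auto simp: indicator_def)

lemma rowsum: "(\<Sum>a<n. \<Sum>b<n. h a * P a b) = (\<Sum>a<n. h a * p a)"
  by (simp add: pd sum_distrib_left)

lemma p_meas: "i < n \<Longrightarrow> p i = measure M {w \<in> space M. X w = x i}"
proof -
  assume i: "i < n"
  have "(LINT w|M. indicator {x i} (X w)) = (\<Sum>a<n. \<Sum>b<n. indicator {x i} (x a) * P a b)"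
    using G[of "\<lambda>s t. indicator {x i} s"] by simp
  also have "\<dots> = (\<Sum>a<n. if a = i then p a else 0)"
    unfolding rowsum using i by (intro sum.cong refl) (simp add: ind_x)
  also have "\<dots> = p i" using i by simp
  finally have 1: "(LINT w|M. indicator {x i} (X w)) = p i" .
  have "(LINT w|M. indicator {x i} (X w)) = (LINT w|M. indicator {w \<in> space M. X w = x i} w)"
    by (rule Bochner_Integration.integral_cong) (auto simp: indicator_def)
  also have "\<dots> = measure M {w \<in> space M. X w = x i}"
    by (simp only: Bochner_Integration.integral_indicator) (metis (no_types, lifting) Int_absorb2 mem_Collect_eq subsetI)
  finally show ?thesis using 1 by simp
qed

lemma p_pos: "i < n \<Longrightarrow> p i > 0"
  using p_meas ppos by simp

lemma indb: "(indicator {c} :: real \<Rightarrow> real) \<in> borel_measurable borel"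
  by (intro borel_measurable_indicator) simp

lemma colsum: "b < n \<Longrightarrow> (\<Sum>a<n. P a b) = p b"
proof -
  assume b: "b < n"
  have "(LINT w|M. (indicator {x b} (Y w) :: real)) = (\<Sum>a<n. \<Sum>c<n. indicator {x b} (x c) * P a c)"
    using G[of "\<lambda>s t. indicator {x b} t"] by simp
  also have "\<dots> = (\<Sum>a<n. \<Sum>c<n. if c = b then P a c else 0)"
    using b by (intro sum.cong refl) (simp add: ind_x)
  also have "\<dots> = (\<Sum>a<n. P a b)" using b by simp
  finally have 1: "(LINT w|M. (indicator {x b} (Y w) :: real)) = (\<Sum>a<n. P a b)" .
  have "(LINT w|M. (indicator {x b} (X w) :: real)) = (\<Sum>a<n. \<Sum>c<n. indicator {x b} (x a) * P a c)"
    using G[of "\<lambda>s t. indicator {x b} s"] by simp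
  also have "\<dots> = (\<Sum>a<n. if a = b then p a else 0)"
    unfolding rowsum using b by (intro sum.cong refl) (simp add: ind_x)
  also have "\<dots> = p b" using b by simp
  finally have 2: "(LINT w|M. (indicator {x b} (X w) :: real)) = p b" .
  have "(LINT w|M. (indicator {x b} (Y w) :: real)) = (LINT t|distr M borel Y. (indicator {x b} t :: real))"
    using integral_distr[OF Ym indb] by simp
  also have "\<dots> = (LINT t|distr M borel X. (indicator {x b} t :: real))" by (simp add: dXY)
  also have "\<dots> = (LINT w|M. (indicator {x b} (X w) :: real))"
    using integral_distr[OF Xm indb] by simp
  finally show ?thesis using 1 2 by simp
qed

lemma colsum_gen: "(\<Sum>a<n. \<Sum>b<n. h b * P a b) = (\<Sum>b<n. h b * p b)"
  by (subst sum.swap) (simp add: colsum sum_distrib_left[symmetric])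

lemma sum_p: "(\<Sum>a<n. p a) = 1"
proof -
  have "(LINT w|M. (\<lambda>s t. 1::real) (X w) (Y w)) = (\<Sum>a<n. \<Sum>b<n. 1 * P a b)"
    using G[of "\<lambda>s t. 1"] by blast
  also have "\<dots> = (\<Sum>a<n. 1 * p a)" by (rule rowsum)
  finally show ?thesis by (simp add: prob_space)
qed


definition mm :: "(real \<Rightarrow> real) \<Rightarrow> real" where
  "mm f = (\<Sum>a<n. f (x a) * p a)"
definition VV :: "(real \<Rightarrow> real) \<Rightarrow> real" where
  "VV f = (\<Sum>a<n. (f (x a) - mm f)\<^sup>2 * p a)"
definition CC :: "(real \<Rightarrow> real) \<Rightarrow> real" where
  "CC f = (\<Sum>a<n. \<Sum>b<n. (f (x a) - mm f) * (f (x b) - mm f) * P a b)"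

lemma EX: "(LINT w|M. f (X w)) = mm f"
  using G[of "\<lambda>s t. f s"] rowsum[of "\<lambda>a. f (x a)"] by (simp add: mm_def)

lemma EY: "(LINT w|M. f (Y w)) = mm f"
  using G[of "\<lambda>s t. f t"] colsum_gen[of "\<lambda>a. f (x a)"] by (simp add: mm_def)

lemma corr_eq: "corr M (\<lambda>w. f (X w)) (\<lambda>w. f (Y w)) = CC f / sqrt (VV f * VV f)"
proof -
  have 1: "covar M (\<lambda>w. f (X w)) (\<lambda>w. f (Y w)) = CC f"
    unfolding covar_def EX EY CC_def using G[of "\<lambda>s t. (f s - mm f) * (f t - mm f)"] by simp
  have 2: "covar M (\<lambda>w. f (X w)) (\<lambda>w. f (X w)) = VV f"
    unfolding covar_def EX VV_def using G[of "\<lambda>s t. (f s - mm f) * (f s - mm f)"]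
      rowsum[of "\<lambda>a. (f (x a) - mm f) * (f (x a) - mm f)"] by (simp add: power2_eq_square)
  have 3: "covar M (\<lambda>w. f (Y w)) (\<lambda>w. f (Y w)) = VV f"
    unfolding covar_def EY VV_def using G[of "\<lambda>s t. (f t - mm f) * (f t - mm f)"]
      colsum_gen[of "\<lambda>a. (f (x a) - mm f) * (f (x a) - mm f)"] by (simp add: power2_eq_square)
  show ?thesis unfolding corr_def 1 2 3 ..
qed

lemma VV_nonneg: "VV f \<ge> 0"
  unfolding VV_def using p_pos by (intro sum_nonneg) (simp add: less_imp_le)

lemma sq_zero:
  assumes "(\<Sum>a<n. (f (x a) - c)\<^sup>2 * p a) = 0" "a < n"
  shows "f (x a) = c"
proof -
  have "\<forall>a\<in>{..<n}. (f (x a) - c)\<^sup>2 * p a = 0"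
    using assms(1) p_pos by (subst sum_nonneg_eq_0_iff[symmetric]) (auto simp: less_imp_le)
  then show ?thesis using assms(2) p_pos[OF assms(2)] by auto
qed

lemma sq_zero_VV:
  assumes "(\<Sum>a<n. (f (x a) - c)\<^sup>2 * p a) = 0"
  shows "VV f = 0"
proof -
  have fc: "\<And>a. a < n \<Longrightarrow> f (x a) = c" using sq_zero[OF assms] .
  have "mm f = (\<Sum>a<n. c * p a)" unfolding mm_def by (intro sum.cong) (auto simp: fc)
  also have "\<dots> = c" by (simp add: sum_distrib_left[symmetric] sum_p)
  finally show ?thesis unfolding VV_def by (simp add: fc)
qed

lemma adm_pos:
  assumes "admissible_rv M (\<lambda>w. f (X w))"
  shows "VV f > 0"
proof (rule ccontr)
  assume "\<not> VV f > 0"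
  then have "VV f = 0" using VV_nonneg[of f] by simp
  then have fc: "\<And>a. a < n \<Longrightarrow> f (x a) = mm f" using sq_zero[of f "mm f"] unfolding VV_def by blast
  have "AE w in M. f (X w) = mm f"
  proof (rule AE_I2)
    fix w assume "w \<in> space M"
    then obtain a where "a < n" "X w = x a" using Xr by blast
    then show "f (X w) = mm f" using fc by simp
  qed
  then show False using assms unfolding admissible_rv_def by blast
qed

lemma pos_adm:
  assumes f[measurable]: "f \<in> borel_measurable borel" and V: "VV f > 0"
  shows "admissible_rv M (\<lambda>w. f (X w)) \<and> admissible_rv M (\<lambda>w. f (Y w))"
proof -
  have nX: "\<not> (\<exists>c. AE w in M. f (X w) = c)"
  proof
    assume "\<exists>c. AE w in M. f (X w) = c"
    then obtain c where c: "AE w in M. f (X w) = c" by blast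
    have "(LINT w|M. (f (X w) - c)\<^sup>2) = (LINT w|M. 0)"
      by (rule integral_cong_AE) (use c in auto)
    moreover have "(LINT w|M. (f (X w) - c)\<^sup>2) = (\<Sum>a<n. (f (x a) - c)\<^sup>2 * p a)"
      using G[of "\<lambda>s t. (f s - c)\<^sup>2"] rowsum[of "\<lambda>a. (f (x a) - c)\<^sup>2"] by simp
    ultimately have "VV f = 0" using sq_zero_VV[of f c] by simp
    then show False using V by simp
  qed
  have nY: "\<not> (\<exists>c. AE w in M. f (Y w) = c)"
  proof
    assume "\<exists>c. AE w in M. f (Y w) = c"
    then obtain c where c: "AE w in M. f (Y w) = c" by blast
    have "(LINT w|M. (f (Y w) - c)\<^sup>2) = (LINT w|M. 0)"
      by (rule integral_cong_AE) (use c in auto)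
    moreover have "(LINT w|M. (f (Y w) - c)\<^sup>2) = (\<Sum>a<n. (f (x a) - c)\<^sup>2 * p a)"
      using G[of "\<lambda>s t. (f t - c)\<^sup>2"] colsum_gen[of "\<lambda>a. (f (x a) - c)\<^sup>2"] by simp
    ultimately have "VV f = 0" using sq_zero_VV[of f c] by simp
    then show False using V by simp
  qed
  show ?thesis unfolding admissible_rv_def
    using nX nY G[of "\<lambda>s t. (f s)\<^sup>2"] G[of "\<lambda>s t. (f t)\<^sup>2"] by simp
qed


definition AA :: "real \<Rightarrow> nat \<Rightarrow> nat \<Rightarrow> real" where
  "AA r a b = P a b - r * (if a = b then p a else 0) - (1 - r) * p a * p b"
definition QQ :: "real \<Rightarrow> (nat \<Rightarrow> real) \<Rightarrow> real" where
  "QQ r v = (\<Sum>a<n. \<Sum>b<n. v a * v b * AA r a b)"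

lemma CV: "CC f - r * VV f = QQ r (\<lambda>a. f (x a))"
proof -
  define v where "v a = f (x a)" for a
  define m where "m = mm f"
  have m: "m = (\<Sum>a<n. v a * p a)" unfolding m_def mm_def v_def ..
  have s1: "(\<Sum>a<n. \<Sum>b<n. v b * P a b) = m" using colsum_gen[of v] m by simp
  have s2: "(\<Sum>a<n. \<Sum>b<n. v a * P a b) = m" using rowsum[of v] m by simp
  have s3: "(\<Sum>a<n. \<Sum>b<n. P a b) = 1" using rowsum[of "\<lambda>_. 1"] sum_p by simp
  have h1: "CC f = (\<Sum>a<n. \<Sum>b<n. v a * v b * P a b) - m * (\<Sum>a<n. \<Sum>b<n. v b * P a b)
      - m * (\<Sum>a<n. \<Sum>b<n. v a * P a b) + m\<^sup>2 * (\<Sum>a<n. \<Sum>b<n. P a b)"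
    unfolding CC_def v_def[symmetric] m_def[symmetric]
    by (simp add: algebra_simps power2_eq_square sum.distrib sum_subtractf sum_distrib_left)
  have h2: "VV f = (\<Sum>a<n. (v a)\<^sup>2 * p a) - 2 * m * (\<Sum>a<n. v a * p a) + m\<^sup>2 * (\<Sum>a<n. p a)"
    unfolding VV_def v_def[symmetric] m_def[symmetric]
    by (simp add: algebra_simps power2_eq_square sum.distrib sum_subtractf sum_distrib_left)
  have d: "(\<Sum>a<n. \<Sum>b<n. v a * v b * (if a = b then p a else 0)) = (\<Sum>a<n. (v a)\<^sup>2 * p a)"
    by (intro sum.cong refl) (simp add: if_distrib[of "\<lambda>t. _ * t"] power2_eq_square cong: if_cong)
  have e: "(\<Sum>a<n. \<Sum>b<n. v a * v b * (p a * p b)) = m\<^sup>2"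
    unfolding m power2_eq_square sum_product by (intro sum.cong refl) (simp add: algebra_simps)
  have h3: "QQ r v = (\<Sum>a<n. \<Sum>b<n. v a * v b * P a b)
      - r * (\<Sum>a<n. \<Sum>b<n. v a * v b * (if a = b then p a else 0))
      - (1 - r) * (\<Sum>a<n. \<Sum>b<n. v a * v b * (p a * p b))"
    unfolding QQ_def AA_def
    by (simp add: algebra_simps sum.distrib sum_subtractf sum_distrib_left)
  show ?thesis unfolding v_def[symmetric] h1 h2 h3 d e s1 s2 s3 sum_p m[symmetric]
    by (simp add: algebra_simps power2_eq_square)
qed

lemma sym_Q:
  assumes "\<forall>a<n. \<forall>b<n. AA r a b + AA r b a = 0"
  shows "QQ r v = 0"
proof -
  have "QQ r v = (\<Sum>b<n. \<Sum>a<n. v a * v b * AA r a b)" unfolding QQ_def by (rule sum.swap)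
  also have "\<dots> = (\<Sum>a<n. \<Sum>b<n. v a * v b * AA r b a)" by (simp add: mult.commute)
  finally have "2 * QQ r v = QQ r v + (\<Sum>a<n. \<Sum>b<n. v a * v b * AA r b a)" by simp
  also have "\<dots> = (\<Sum>a<n. \<Sum>b<n. v a * v b * (AA r a b + AA r b a))"
    unfolding QQ_def by (simp add: algebra_simps sum.distrib)
  also have "\<dots> = 0" using assms by simp
  finally show ?thesis by simp
qed

lemma Q_ind:
  assumes "S \<subseteq> {..<n}"
  shows "QQ r (\<lambda>c. if c \<in> S then 1 else 0) = (\<Sum>c\<in>S. \<Sum>d\<in>S. AA r c d)"
proof -
  have S: "{..<n} \<inter> S = S" using assms by auto
  have "QQ r (\<lambda>c. if c \<in> S then 1 else 0) = (\<Sum>c<n. if c \<in> S then (\<Sum>d<n. if d \<in> S then AA r c d else 0) else 0)"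
    unfolding QQ_def by (intro sum.cong refl) (auto intro!: sum.cong)
  also have "\<dots> = (\<Sum>c<n. if c \<in> S then (\<Sum>d\<in>S. AA r c d) else 0)"
    by (simp add: sum.inter_restrict[symmetric] S)
  also have "\<dots> = (\<Sum>c\<in>S. \<Sum>d\<in>S. AA r c d)"
    by (simp add: sum.inter_restrict[symmetric] S)
  finally show ?thesis .
qed

lemma Q_sym:
  assumes "\<forall>v. QQ r v = 0" "a < n" "b < n"
  shows "AA r a b + AA r b a = 0"
proof -
  have aa: "AA r a a = 0" using assms(1) Q_ind[of "{a}" r] assms(2) by simp
  have bb: "AA r b b = 0" using assms(1) Q_ind[of "{b}" r] assms(3) by simp
  show ?thesis
  proof (cases "a = b")
    case True then show ?thesis using aa by simp
  next
    case False
    then show ?thesis using assms(1) Q_ind[of "{a,b}" r] assms(2,3) aa bb by simp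
  qed
qed

lemma matrix_AA:
  "(P a b + P b a) / 2 = r * (if a = b then p a else 0) + (1 - r) * p a * p b
    \<longleftrightarrow> AA r a b + AA r b a = 0"
  by (cases "a = b") (auto simp: AA_def field_simps)


lemma p_pair: "i < n \<Longrightarrow> j < n \<Longrightarrow> i \<noteq> j \<Longrightarrow> p i + p j \<le> 1"
proof -
  assume ij: "i < n" "j < n" "i \<noteq> j"
  have "(\<Sum>a\<in>{i,j}. p a) \<le> (\<Sum>a<n. p a)"
    using ij p_pos by (intro sum_mono2) (auto simp: less_imp_le)
  then show ?thesis using ij sum_p by simp
qed

lemma p_lt1: "j < n \<Longrightarrow> p j < 1"
proof -
  assume j: "j < n"
  define k where "k = (if j = 0 then 1 else (0::nat))"
  have k: "k < n" "k \<noteq> j" unfolding k_def using n2 by auto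
  show ?thesis using p_pair[OF j k(1) k(2)[symmetric]] p_pos[OF k(1)] by simp
qed

lemma key: "IC M X Y r \<longleftrightarrow> (\<forall>v. QQ r v = 0)"
proof
  assume ic: "IC M X Y r"
  show "\<forall>v. QQ r v = 0"
  proof
    fix v :: "nat \<Rightarrow> real"
    define g where "g t = (\<Sum>i<n. v i * indicator {x i} t)" for t :: real
    have gx: "g (x k) = v k" if "k < n" for k
    proof -
      have "g (x k) = (\<Sum>i<n. if i = k then v i else 0)"
        unfolding g_def using that by (intro sum.cong refl) (auto simp: ind_x)
      then show ?thesis using that by simp
    qed
    have gm: "g \<in> borel_measurable borel"
      unfolding g_def by (intro borel_measurable_sum borel_measurable_times borel_measurable_const indb)
    have "QQ r v = QQ r (\<lambda>a. g (x a))"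
      unfolding QQ_def by (intro sum.cong refl) (simp add: gx)
    also have "\<dots> = CC g - r * VV g" by (rule CV[symmetric])
    also have "\<dots> = 0"
    proof (cases "VV g > 0")
      case True
      then have "corr M (\<lambda>w. g (X w)) (\<lambda>w. g (Y w)) = r"
        using ic pos_adm[OF gm True] gm unfolding IC_def by blast
      then have "CC g / VV g = r" using corr_eq[of g] True by (simp add: real_sqrt_mult_self)
      then show ?thesis using True by (simp add: field_simps)
    next
      case False
      then have "VV g = 0" using VV_nonneg[of g] by simp
      then have fc: "\<And>a. a < n \<Longrightarrow> g (x a) = mm g" using sq_zero[of g "mm g"] unfolding VV_def by blast
      have "CC g = 0" unfolding CC_def by (simp add: fc)
      then show ?thesis using \<open>VV g = 0\<close> by simp
    qed
    finally show "QQ r v = 0" .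
  qed
next
  assume Q: "\<forall>v. QQ r v = 0"
  have c: "corr M (\<lambda>w. f (X w)) (\<lambda>w. f (Y w)) = r" if V: "VV f > 0" for f
  proof -
    have "CC f - r * VV f = 0" using CV[of f r] Q by simp
    then have "CC f = r * VV f" by simp
    then show ?thesis using corr_eq[of f] V by (simp add: real_sqrt_mult_self)
  qed
  have "VV (\<lambda>t. t) > 0"
  proof (rule ccontr)
    assume "\<not> VV (\<lambda>t. t) > 0"
    then have "VV (\<lambda>t. t) = 0" using VV_nonneg[of "\<lambda>t. t"] by simp
    then have fc: "\<And>a. a < n \<Longrightarrow> x a = mm (\<lambda>t. t)" using sq_zero[of "\<lambda>t. t" "mm (\<lambda>t. t)"] unfolding VV_def by blast
    have "x 0 < x 1" using xmono[of 0 1] n2 by simp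
    then show False using fc[of 0] fc[of 1] n2 by simp
  qed
  from c[OF this] have "corr M X Y = r" by simp
  moreover have "corr M (\<lambda>w. g (X w)) (\<lambda>w. g (Y w)) = r"
    if "admissible_rv M (\<lambda>w. g (X w))" for g
    using c[OF adm_pos[OF that]] .
  ultimately show "IC M X Y r" unfolding IC_def by blast
qed

end

theorem proposition6:
  fixes M :: "'a measure" and X Y :: "'a \<Rightarrow> real" and n :: nat and x :: "nat \<Rightarrow> real"
    and r :: real and P :: "nat \<Rightarrow> nat \<Rightarrow> real" and p :: "nat \<Rightarrow> real"
  assumes "prob_space M"
    and "X \<in> borel_measurable M" and "Y \<in> borel_measurable M"
    and "n \<ge> 2"
    and "\<And>i j. i < j \<Longrightarrow> j < n \<Longrightarrow> x i < x j"
    and "\<And>w. w \<in> space M \<Longrightarrow> X w \<in> x ` {..<n}"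
    and "\<And>w. w \<in> space M \<Longrightarrow> Y w \<in> x ` {..<n}"
    and "distr M borel X = distr M borel Y"
    and "\<And>i. i < n \<Longrightarrow> measure M {w \<in> space M. X w = x i} > 0"
    and P_def: "\<And>i j. P i j = measure M {w \<in> space M. X w = x i \<and> Y w = x j}"
    and p_def: "\<And>i. p i = (\<Sum>j<n. P i j)"
    and "-1 \<le> r" and "r \<le> 1"
  shows "(IC M X Y r \<longleftrightarrow>
           (\<forall>i<n. \<forall>j<n. (P i j + P j i) / 2
               = r * (if i = j then p i else 0) + (1 - r) * p i * p j))
       \<and> (IC M X Y r \<longrightarrow>
           max (Max ((\<lambda>j. - (p j / (1 - p j))) ` {..<n}))
               (Max {1 - 1 / (p i * p j) | i j. i < n \<and> j < n \<and> i \<noteq> j}) \<le> r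
           \<and> r \<le> 1)"
proof -
  interpret L: finpair M X Y n x P p
    unfolding finpair_def finpair_axioms_def using assms by blast
  have eqv: "IC M X Y r \<longleftrightarrow>
           (\<forall>i<n. \<forall>j<n. (P i j + P j i) / 2
               = r * (if i = j then p i else 0) + (1 - r) * p i * p j)"
    unfolding L.key L.matrix_AA using L.sym_Q L.Q_sym by blast
  have bnd: "max (Max ((\<lambda>j. - (p j / (1 - p j))) ` {..<n}))
               (Max {1 - 1 / (p i * p j) | i j. i < n \<and> j < n \<and> i \<noteq> j}) \<le> r"
    if ic: "IC M X Y r"
  proof -
    have m: "\<forall>i<n. \<forall>j<n. (P i j + P j i) / 2
               = r * (if i = j then p i else 0) + (1 - r) * p i * p j" using ic eqv by blast
    have b1: "- (p j / (1 - p j)) \<le> r" if j: "j < n" for j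
    proof -
      have "(P j j + P j j) / 2 = r * (if j = j then p j else 0) + (1 - r) * p j * p j"
        using m j by blast
      then have "P j j = r * p j + (1 - r) * p j * p j" by simp
      moreover have "P j j \<ge> 0" by (simp add: P_def)
      ultimately have "0 \<le> p j * (r + (1 - r) * p j)" by (simp add: algebra_simps)
      then have "0 \<le> r + (1 - r) * p j" using L.p_pos[OF j] by (simp add: zero_le_mult_iff)
      then have "- p j \<le> r * (1 - p j)" by (simp add: algebra_simps)
      moreover have "0 < 1 - p j" using L.p_lt1[OF j] by simp
      ultimately have "(- p j) / (1 - p j) \<le> r"
        by (subst pos_divide_le_eq) (simp_all add: mult.commute)
      then show ?thesis by (metis minus_divide_left)
    qed
    have b2: "1 - 1 / (p i * p j) \<le> r" if ij: "i < n" "j < n" "i \<noteq> j" for i j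
    proof -
      have pi: "p i > 0" and pj: "p j > 0" using L.p_pos ij by auto
      have s: "p i + p j \<le> 1" using L.p_pair ij by blast
      have "p i * p j \<le> p i * (1 - p i)" using pi s by (intro mult_left_mono) auto
      also have "\<dots> \<le> 1 / 2" using zero_le_power2[of "p i - 1/2"]
        by (simp add: power2_eq_square algebra_simps)
      finally have q: "p i * p j \<le> 1 / 2" .
      have "2 \<le> 1 / (p i * p j)" using q pi pj by (simp add: field_simps)
      then show ?thesis using assms(12) by simp
    qed
    have n0: "{..<n} \<noteq> {}" using assms(4) by (simp add: lessThan_empty_iff)
    have M1: "Max ((\<lambda>j. - (p j / (1 - p j))) ` {..<n}) \<le> r"
      using n0 b1 by (subst Max_le_iff) auto
    define S where "S = {1 - 1 / (p i * p j) | i j. i < n \<and> j < n \<and> i \<noteq> j}"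
    have fS: "finite S"
      by (rule finite_subset[of _ "(\<lambda>(i,j). 1 - 1 / (p i * p j)) ` ({..<n} \<times> {..<n})"])
        (auto simp: S_def)
    have "1 - 1 / (p 0 * p 1) \<in> S" unfolding S_def using assms(4)
      by (intro CollectI exI[of _ 0] exI[of _ "1::nat"]) auto
    then have neS: "S \<noteq> {}" by blast
    have M2: "Max S \<le> r" using fS neS b2 by (subst Max_le_iff) (auto simp: S_def)
    show ?thesis using M1 M2 unfolding S_def by simp
  qed
  show ?thesis using eqv bnd assms(13) by blast
qed

end
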